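(* Let $H=(L\uplus R,E_H)$ be a bipartite graph and $\alpha>1$ a real number such that $|N_H(A)|\ge\alpha|A|$ for every $A\subseteq L$. Let $F\subseteq E_H$ be a matching in which not all vertices of $L$ are matched. Then there is an augmenting path with respect to $F$ of length at most $2D+1$, where $D=\lfloor\log_\alpha|L|\rfloor+1$.
   Context: $N_H(A)$ denotes the set of vertices adjacent in $H$ to some vertex of $A$. An augmenting path with respect to a matching $F$ is a path starting at an unmatched vertex of $L$, ending at an unmatched vertex of $R$, whose edges alternate between edges not in $F$ and edges in $F$. *)

theory Defs
  imports Complex_Main
begin

definition bipartite_graph :: "'a set \<Rightarrow> 'a set \<Rightarrow> ('a \<times> 'a) set \<Rightarrow> bool" where
  "bipartite_graph L R E \<longleftrightarrow> finite L \<and> finite R \<and> L \<inter> R = {} \<and> E \<subseteq> L \<times> R"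

definition nbhd :: "('a \<times> 'a) set \<Rightarrow> 'a set \<Rightarrow> 'a set" where
  "nbhd E A = {v. \<exists>u\<in>A. (u, v) \<in> E \<or> (v, u) \<in> E}"

definition is_matching :: "('a \<times> 'a) set \<Rightarrow> ('a \<times> 'a) set \<Rightarrow> bool" where
  "is_matching E F \<longleftrightarrow> F \<subseteq> E \<and>
     (\<forall>e1\<in>F. \<forall>e2\<in>F. (fst e1 = fst e2 \<or> snd e1 = snd e2 \<or> fst e1 = snd e2 \<or> snd e1 = fst e2) \<longrightarrow> e1 = e2)"

definition matched :: "('a \<times> 'a) set \<Rightarrow> 'a \<Rightarrow> bool" where
  "matched F v \<longleftrightarrow> (\<exists>e\<in>F. v = fst e \<or> v = snd e)"

definition joined :: "('a \<times> 'a) set \<Rightarrow> 'a \<Rightarrow> 'a \<Rightarrow> bool" where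
  "joined X u v \<longleftrightarrow> (u, v) \<in> X \<or> (v, u) \<in> X"

definition augmenting_path ::
  "'a set \<Rightarrow> 'a set \<Rightarrow> ('a \<times> 'a) set \<Rightarrow> ('a \<times> 'a) set \<Rightarrow> 'a list \<Rightarrow> bool" where
  "augmenting_path L R E F p \<longleftrightarrow>
     length p \<ge> 2 \<and> distinct p \<and>
     hd p \<in> L \<and> \<not> matched F (hd p) \<and>
     last p \<in> R \<and> \<not> matched F (last p) \<and>
     (\<forall>i < length p - 1. joined E (p ! i) (p ! Suc i) \<and>
        (if even i then \<not> joined F (p ! i) (p ! Suc i) else joined F (p ! i) (p ! Suc i)))"

definition path_length :: "'a list \<Rightarrow> nat" where
  "path_length p = length p - 1"

end

theory Submission
  imports Defs
begin

locale aug_setup =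
  fixes L R :: "'a set" and E F :: "('a \<times> 'a) set" and u :: 'a
  assumes bip: "bipartite_graph L R E" and mat: "is_matching E F"
    and uL: "u \<in> L" and um: "\<not> matched F u"
begin

definition alt :: "'a list \<Rightarrow> bool" where
  "alt p \<longleftrightarrow> p \<noteq> [] \<and> distinct p \<and> hd p = u \<and>
     (\<forall>i < length p - 1. joined E (p ! i) (p ! Suc i) \<and>
        (if even i then \<not> joined F (p ! i) (p ! Suc i) else joined F (p ! i) (p ! Suc i)))"

definition T :: "nat \<Rightarrow> 'a set" where
  "T k = {x \<in> L. \<exists>p. alt p \<and> last p = x \<and> length p \<le> 2 * k + 1}"

definition m :: "'a \<Rightarrow> 'a" where
  "m r = (SOME y. joined F r y)"

lemma uniq: "joined F a b \<Longrightarrow> joined F a c \<Longrightarrow> b = c"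
  using mat unfolding is_matching_def joined_def
  by (metis fst_conv snd_conv prod.inject)

lemma jF_E: "joined F a b \<Longrightarrow> joined E a b"
  using mat unfolding is_matching_def joined_def by blast

lemma jE: "joined E a b \<Longrightarrow> (a \<in> L \<and> b \<in> R) \<or> (a \<in> R \<and> b \<in> L)"
  using bip unfolding bipartite_graph_def joined_def by blast

lemma LR: "L \<inter> R = {}" using bip unfolding bipartite_graph_def by blast

lemma jF_matched: "joined F a b \<Longrightarrow> matched F a"
  unfolding joined_def matched_def by force

lemma matched_m: "matched F r \<Longrightarrow> joined F r (m r)"
proof -
  assume "matched F r"
  then obtain e where "e \<in> F" "r = fst e \<or> r = snd e" unfolding matched_def by blast
  then have "\<exists>y. joined F r y" unfolding joined_def by (metis prod.collapse)
  then show ?thesis unfolding m_def by (rule someI_ex)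
qed

lemma parity: "alt p \<Longrightarrow> i < length p \<Longrightarrow> (p ! i \<in> L \<longleftrightarrow> even i) \<and> p ! i \<in> L \<union> R"
proof (induction i)
  case 0
  then have "p ! 0 = u" unfolding alt_def by (metis hd_conv_nth)
  then show ?case using uL by simp
next
  case (Suc i)
  then have "joined E (p ! i) (p ! Suc i)" unfolding alt_def by auto
  with Suc jE LR show ?case by auto
qed

lemma alt_take: "alt p \<Longrightarrow> 0 < n \<Longrightarrow> alt (take n p)"
  unfolding alt_def by (auto simp: hd_take)

lemma alt_snoc:
  assumes "alt p" "y \<notin> set p" "joined E (last p) y"
    "if even (length p - 1) then \<not> joined F (last p) y else joined F (last p) y"
  shows "alt (p @ [y])"
proof -
  have ne: "p \<noteq> []" using assms(1) unfolding alt_def by auto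
  have lp: "last p = p ! (length p - 1)" using ne by (simp add: last_conv_nth)
  have A: "\<forall>i < length (p @ [y]) - 1. joined E ((p @ [y]) ! i) ((p @ [y]) ! Suc i) \<and>
        (if even i then \<not> joined F ((p @ [y]) ! i) ((p @ [y]) ! Suc i)
         else joined F ((p @ [y]) ! i) ((p @ [y]) ! Suc i))"
  proof (intro allI impI)
    fix i assume i: "i < length (p @ [y]) - 1"
    show "joined E ((p @ [y]) ! i) ((p @ [y]) ! Suc i) \<and>
        (if even i then \<not> joined F ((p @ [y]) ! i) ((p @ [y]) ! Suc i)
         else joined F ((p @ [y]) ! i) ((p @ [y]) ! Suc i))"
    proof (cases "i < length p - 1")
      case True
      then show ?thesis using assms(1) unfolding alt_def by (auto simp: nth_append)
    next
      case False
      then have "i = length p - 1" using i by auto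
      then show ?thesis using assms ne lp by (auto simp: nth_append)
    qed
  qed
  then show ?thesis using assms ne unfolding alt_def by auto
qed

lemma jsym: "joined X a b = joined X b a"
  unfolding joined_def by auto

lemma step:
  assumes x: "x \<in> T k" "joined E x r"
    and noaug: "\<not> (\<exists>q. augmenting_path L R E F q \<and> path_length q \<le> 2 * k + 1)"
  shows "matched F r \<and> m r \<in> T (Suc k)"
proof -
  obtain p where p: "alt p" "last p = x" "length p \<le> 2 * k + 1" and xL: "x \<in> L"
    using x(1) unfolding T_def by blast
  define n where "n = length p"
  have ne: "p \<noteq> []" using p(1) unfolding alt_def by auto
  have n1: "n \<ge> 1" using ne unfolding n_def by (cases p) auto
  have lx: "p ! (n - 1) = x" using p(2) ne unfolding n_def by (simp add: last_conv_nth)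
  have ev: "even (n - 1)" using parity[OF p(1), of "n - 1"] lx xL n1 unfolding n_def by auto
  have rR: "r \<in> R" using jE[OF x(2)] xL LR by auto
  have rL: "r \<notin> L" using rR LR by auto
  have altc: "\<And>i. i < n - 1 \<Longrightarrow> joined E (p ! i) (p ! Suc i) \<and>
        (if even i then \<not> joined F (p ! i) (p ! Suc i) else joined F (p ! i) (p ! Suc i))"
    using p(1) unfolding alt_def n_def by auto
  show ?thesis
  proof (cases "r \<in> set p")
    case True
    then obtain i where i: "i < n" "p ! i = r" unfolding n_def by (metis in_set_conv_nth)
    have oi: "odd i" using parity[OF p(1), of i] i rL unfolding n_def by auto
    have "i \<noteq> n - 1" using i lx xL rL by auto
    then have si: "i < n - 1" using i by auto
    have jr: "joined F r (p ! Suc i)" using altc[OF si] oi i by auto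
    have mr: "matched F r" using jF_matched[OF jr] .
    have mreq: "m r = p ! Suc i" using uniq[OF matched_m[OF mr] jr] .
    have a: "alt (take (Suc (Suc i)) p)" using alt_take[OF p(1)] by auto
    have l: "last (take (Suc (Suc i)) p) = p ! Suc i"
      using si unfolding n_def by (subst take_Suc_conv_app_nth) auto
    have yL: "p ! Suc i \<in> L" using parity[OF p(1), of "Suc i"] si oi unfolding n_def by auto
    have "length (take (Suc (Suc i)) p) \<le> 2 * Suc k + 1" using p(3) by auto
    then have "m r \<in> T (Suc k)" unfolding T_def using a l yL mreq by (simp only: mem_Collect_eq) metis
    with mr show ?thesis by blast
  next
    case False
    have nF: "\<not> joined F x r"
    proof
      assume jxr: "joined F x r"
      show False
      proof (cases "n = 1")
        case True
        then have "x = u" using lx p(1) ne unfolding alt_def by (metis diff_self_eq_0 hd_conv_nth)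
        then show False using jF_matched[OF jxr] um by simp
      next
        case False
        then have j0: "n - 2 < n - 1" "Suc (n - 2) = n - 1" using n1 by auto
        have "odd (n - 2)" using ev j0(2) by (metis even_Suc)
        note j = j0(1) this j0(2)
        then have "joined F (p ! (n - 2)) x" using altc[OF j(1)] lx by auto
        then have "r = p ! (n - 2)" using uniq jxr jsym by metis
        then have "r \<in> set p" using j unfolding n_def by auto
        with \<open>r \<notin> set p\<close> show False by simp
      qed
    qed
    have aq: "alt (p @ [r])" using alt_snoc[OF p(1) False] x(2) p(2) nF ev unfolding n_def by auto
    have mr: "matched F r"
    proof (rule ccontr)
      assume um2: "\<not> matched F r"
      have "augmenting_path L R E F (p @ [r])"
        using aq um2 um uL rR ne n1 unfolding augmenting_path_def alt_def n_def by auto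
      moreover have "path_length (p @ [r]) \<le> 2 * k + 1" using p(3) unfolding path_length_def by auto
      ultimately show False using noaug by blast
    qed
    define y where "y = m r"
    have jy: "joined F r y" using matched_m[OF mr] unfolding y_def .
    have yL: "y \<in> L" using jE[OF jF_E[OF jy]] rL by auto
    have yp: "y \<notin> set p"
    proof
      assume "y \<in> set p"
      then obtain j where j: "j < n" "p ! j = y" unfolding n_def by (metis in_set_conv_nth)
      show False
      proof (cases "j = 0")
        case True
        then have "y = u" using j p(1) ne unfolding alt_def by (metis hd_conv_nth)
        then show False using jF_matched jy jsym um by metis
      next
        case False
        have ej: "even j" using parity[OF p(1), of j] j yL unfolding n_def by auto
        have j1: "j - 1 < n - 1" "odd (j - 1)" "Suc (j - 1) = j" using False j ej by auto
        then have "joined F (p ! (j - 1)) y" using altc[OF j1(1)] j by auto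
        then have "r = p ! (j - 1)" using uniq jy jsym by metis
        then have "r \<in> set p" using j1 unfolding n_def by auto
        with \<open>r \<notin> set p\<close> show False by simp
      qed
    qed
    have "y \<noteq> r" using yL rL by auto
    then have a2: "alt ((p @ [r]) @ [y])"
      using alt_snoc[OF aq] yp jy jF_E ev n1 unfolding n_def by auto
    have "length ((p @ [r]) @ [y]) \<le> 2 * Suc k + 1" using p(3) by auto
    then have "y \<in> T (Suc k)" unfolding T_def using a2 yL by fastforce
    with mr show ?thesis unfolding y_def by blast
  qed
qed

lemma T_sub: "T k \<subseteq> L" unfolding T_def by auto

lemma finL: "finite L" using bip unfolding bipartite_graph_def by auto

lemma u_T: "u \<in> T k"
proof -
  have "alt [u]" unfolding alt_def by auto
  then show ?thesis unfolding T_def using uL by force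
qed

lemma card_step:
  fixes \<alpha> :: real
  assumes exp: "\<forall>A. A \<subseteq> L \<longrightarrow> real (card (nbhd E A)) \<ge> \<alpha> * real (card A)"
    and noaug: "\<not> (\<exists>q. augmenting_path L R E F q \<and> path_length q \<le> 2 * k + 1)"
  shows "real (card (T (Suc k))) \<ge> 1 + \<alpha> * real (card (T k))"
proof -
  define N where "N = nbhd E (T k)"
  have st: "\<And>r. r \<in> N \<Longrightarrow> matched F r \<and> m r \<in> T (Suc k)"
  proof -
    fix r assume "r \<in> N"
    then obtain x where "x \<in> T k" "joined E x r" unfolding N_def nbhd_def joined_def by auto
    then show "matched F r \<and> m r \<in> T (Suc k)" using step noaug by blast
  qed
  have inj: "inj_on m N"
  proof (rule inj_onI)
    fix a b assume "a \<in> N" "b \<in> N" "m a = m b"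
    then have "joined F (m a) a" "joined F (m a) b" using st matched_m jsym by metis+
    then show "a = b" using uniq by blast
  qed
  have nu: "u \<notin> m ` N"
  proof
    assume "u \<in> m ` N"
    then obtain r where "r \<in> N" "u = m r" by auto
    then have "joined F u r" using st matched_m jsym by metis
    then show False using jF_matched um by blast
  qed
  have sub: "insert u (m ` N) \<subseteq> T (Suc k)" using st u_T by auto
  have finN: "finite N" using st inj finite_subset[OF T_sub finL]
    by (metis finite_imageD finite_subset image_subsetI)
  have "card (insert u (m ` N)) = 1 + card N" using nu inj finN by (simp add: card_image)
  moreover have "card (insert u (m ` N)) \<le> card (T (Suc k))"
    using sub finite_subset[OF T_sub finL] by (rule card_mono[rotated])
  moreover have "real (card N) \<ge> \<alpha> * real (card (T k))" using exp T_sub unfolding N_def by blast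
  ultimately show ?thesis by linarith
qed

end

theorem lemma6:
  fixes L R :: "'a set" and E F :: "('a \<times> 'a) set" and \<alpha> :: real
  assumes "bipartite_graph L R E"
    and "\<alpha> > 1"
    and "\<forall>A. A \<subseteq> L \<longrightarrow> real (card (nbhd E A)) \<ge> \<alpha> * real (card A)"
    and "is_matching E F"
    and "\<exists>v\<in>L. \<not> matched F v"
  shows "\<exists>p. augmenting_path L R E F p \<and>
           int (path_length p) \<le> 2 * (\<lfloor>log \<alpha> (real (card L))\<rfloor> + 1) + 1"
proof (rule ccontr)
  assume contra: "\<not> ?thesis"
  obtain u where u: "u \<in> L" "\<not> matched F u" using assms(5) by blast
  interpret aug_setup L R E F u using assms(1,4) u by unfold_locales
  define n where "n = card L"
  have n1: "n \<ge> 1" using finL u unfolding n_def by (metis One_nat_def Suc_leI card_gt_0_iff empty_iff)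
  have lg: "log \<alpha> (real n) \<ge> 0" using n1 assms(2) by simp
  define D where "D = nat \<lfloor>log \<alpha> (real n)\<rfloor> + 1"
  have Dint: "int D = \<lfloor>log \<alpha> (real n)\<rfloor> + 1" using lg unfolding D_def by simp
  have noaug: "\<And>k. k \<le> D \<Longrightarrow> \<not> (\<exists>q. augmenting_path L R E F q \<and> path_length q \<le> 2 * k + 1)"
  proof
    fix k assume k: "k \<le> D" and "\<exists>q. augmenting_path L R E F q \<and> path_length q \<le> 2 * k + 1"
    then obtain q where q: "augmenting_path L R E F q" "path_length q \<le> 2 * k + 1" by blast
    have "int (path_length q) \<le> 2 * int k + 1" using q(2) by linarith
    also have "\<dots> \<le> 2 * int D + 1" using k by simp
    finally have "int (path_length q) \<le> 2 * (\<lfloor>log \<alpha> (real (card L))\<rfloor> + 1) + 1"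
      using Dint unfolding n_def by simp
    then show False using contra q(1) by blast
  qed
  have pow: "k \<le> D \<Longrightarrow> real (card (T k)) \<ge> \<alpha> ^ k" for k
  proof (induction k)
    case 0
    have "finite (T 0)" using finite_subset[OF T_sub finL] .
    then have "card (T 0) \<ge> 1" using u_T by (metis One_nat_def Suc_leI card_gt_0_iff empty_iff)
    then show ?case by simp
  next
    case (Suc k)
    then have ih: "real (card (T k)) \<ge> \<alpha> ^ k" by simp
    have "real (card (T (Suc k))) \<ge> 1 + \<alpha> * real (card (T k))"
      using card_step[OF assms(3) noaug] Suc.prems by simp
    moreover have "\<alpha> * real (card (T k)) \<ge> \<alpha> * \<alpha> ^ k"
      using ih assms(2) by (simp add: mult_left_mono)
    ultimately show ?case by simp
  qed
  have "\<alpha> ^ D \<le> real n"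
  proof -
    have "card (T D) \<le> n" unfolding n_def using card_mono[OF finL T_sub] .
    then show ?thesis using pow[of D] by linarith
  qed
  moreover have "real n < \<alpha> ^ D"
  proof -
    have "log \<alpha> (real n) < real D" using Dint by linarith
    then have "\<alpha> powr (log \<alpha> (real n)) < \<alpha> powr (real D)"
      using assms(2) by (simp add: powr_less_mono)
    moreover have "\<alpha> powr (log \<alpha> (real n)) = real n" using n1 assms(2) by simp
    moreover have "\<alpha> powr (real D) = \<alpha> ^ D" using assms(2) by (simp add: powr_realpow)
    ultimately show ?thesis by simp
  qed
  ultimately show False by simp
qed

end
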